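(* Let $\mathcal{U}$ be an idempotent ultrafilter in $(\beta\mathbb{N},+)$. If $\mu,\nu\in\mathbb{A}_{\mathcal{U}}$, then $\mu\,\hat{}\,\nu\in\mathbb{A}_{\mathcal{U}}$.
   Context: For $a,b\subseteq(0,1]$ put $a\,\hat{}\,b=\tfrac12 a\cup\tfrac12(b+1)$; $\mathbb{T}$ is the set generated from $\mathbf{1}=\{1\}$ by $\hat{}$ (the free binary system on one generator), $\#(t)$ is the cardinality of $t$, $\mathbb{T}_n=\{t:\#(t)=n\}$, and $\mathbb{A}_n$ is the set of probability measures on $\mathbb{T}_n$. For a set $S$, $\Pr(S)$ denotes the set of finitely additive probability measures on $S$, identified with the positive linear functionals $f$ on $\ell^\infty(S)$ with $f(\bar 1)=1$, equipped with the weak* topology; $\mathbb{A}_n\subseteq\Pr(\mathbb{T})$. For $\mu,\nu\in\Pr(\mathbb{T})$, $(\mu\,\hat{}\,\nu)(f)=\int\int f(x\,\hat{}\,y)\,d\nu(y)\,d\mu(x)$ for $f\in\ell^\infty(\mathbb{T})$. $\beta\mathbb{N}$ carries the usual extension of addition ($W\in\mathcal{U}+\mathcal{V}$ iff $\{m:\{n:m+n\in W\}\in\mathcal{V}\}\in\mathcal{U}$), and $\mathcal{U}$ is idempotent if $\mathcal{U}+\mathcal{U}=\mathcal{U}$. $\mathbb{A}_{\mathcal{U}}$ is the set of $\mu\in\Pr(\mathbb{T})$ such that for every weak*-open $W\ni\mu$, $\{m\in\mathbb{N}:W\cap\mathbb{A}_m\neq\emptyset\}\in\mathcal{U}$. 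*)

theory Defs
  imports Complex_Main
begin

definition hat :: "real set \<Rightarrow> real set \<Rightarrow> real set" (infixr "\<^sup>\<and>" 80) where
  "hat a b = (\<lambda>x. x / 2) ` a \<union> (\<lambda>x. (x + 1) / 2) ` b"

inductive_set TT :: "real set set" where
  one: "{1} \<in> TT"
| hat: "a \<in> TT \<Longrightarrow> b \<in> TT \<Longrightarrow> hat a b \<in> TT"

definition TTn :: "nat \<Rightarrow> real set set" where
  "TTn n = {t \<in> TT. card t = n}"

text \<open>Bounded real functions on \<T>, represented extensionally (value 0 off \<T>).\<close>
definition linf :: "(real set \<Rightarrow> real) set" where
  "linf = {g. (\<exists>B. \<forall>x\<in>TT. \<bar>g x\<bar> \<le> B) \<and> (\<forall>x. x \<notin> TT \<longrightarrow> g x = 0)}"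

text \<open>Pr(\<T>): positive linear functionals on linf with value 1 at the constant one
  (extended by 0 outside linf, so that the representation is unique).\<close>
definition PrT :: "((real set \<Rightarrow> real) \<Rightarrow> real) set" where
  "PrT = {\<mu>. (\<forall>f\<in>linf. \<forall>g\<in>linf. \<forall>c::real. \<mu> (\<lambda>x. c * f x + g x) = c * \<mu> f + \<mu> g)
            \<and> (\<forall>f\<in>linf. (\<forall>x\<in>TT. 0 \<le> f x) \<longrightarrow> 0 \<le> \<mu> f)
            \<and> \<mu> (\<lambda>x. if x \<in> TT then 1 else 0) = 1
            \<and> (\<forall>f. f \<notin> linf \<longrightarrow> \<mu> f = 0)}"

text \<open>Weak* open subsets of Pr(\<T>) (subspace topology of the weak* topology).\<close>
definition weakstar_open :: "((real set \<Rightarrow> real) \<Rightarrow> real) set \<Rightarrow> bool" where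
  "weakstar_open W \<longleftrightarrow> W \<subseteq> PrT \<and>
     (\<forall>\<mu>\<in>W. \<exists>F e. finite F \<and> F \<subseteq> linf \<and> e > 0 \<and>
        {\<nu>\<in>PrT. \<forall>g\<in>F. \<bar>\<nu> g - \<mu> g\<bar> < e} \<subseteq> W)"

text \<open>\<A>_n: probability measures on \<T>_n, viewed as elements of Pr(\<T>).\<close>
definition AA :: "nat \<Rightarrow> ((real set \<Rightarrow> real) \<Rightarrow> real) set" where
  "AA n = {\<mu>\<in>PrT. \<exists>p::real set \<Rightarrow> real. (\<forall>t\<in>TTn n. 0 \<le> p t) \<and> (\<Sum>t\<in>TTn n. p t) = 1 \<and>
             (\<forall>f\<in>linf. \<mu> f = (\<Sum>t\<in>TTn n. p t * f t))}"

text \<open>The product \<mu>^\<nu>: (\<mu>^\<nu>)(f) = \<integral>\<integral> f(x^y) d\<nu>(y) d\<mu>(x).\<close>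
definition mhat :: "((real set \<Rightarrow> real) \<Rightarrow> real) \<Rightarrow> ((real set \<Rightarrow> real) \<Rightarrow> real)
                     \<Rightarrow> ((real set \<Rightarrow> real) \<Rightarrow> real)" where
  "mhat \<mu> \<nu> = (\<lambda>f. if f \<in> linf then
       \<mu> (\<lambda>x. if x \<in> TT then \<nu> (\<lambda>y. if y \<in> TT then f (hat x y) else 0) else 0)
     else 0)"

definition Npos :: "nat set" where "Npos = {n. 1 \<le> n}"

definition is_ultrafilter :: "nat set set \<Rightarrow> bool" where
  "is_ultrafilter U \<longleftrightarrow> (\<forall>A\<in>U. A \<subseteq> Npos) \<and> Npos \<in> U \<and> {} \<notin> U
     \<and> (\<forall>A\<in>U. \<forall>B\<in>U. A \<inter> B \<in> U)
     \<and> (\<forall>A\<in>U. \<forall>B. A \<subseteq> B \<and> B \<subseteq> Npos \<longrightarrow> B \<in> U)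
     \<and> (\<forall>A. A \<subseteq> Npos \<longrightarrow> A \<in> U \<or> Npos - A \<in> U)"

definition uf_plus :: "nat set set \<Rightarrow> nat set set \<Rightarrow> nat set set" where
  "uf_plus U V = {W. W \<subseteq> Npos \<and> {m\<in>Npos. {n\<in>Npos. m + n \<in> W} \<in> V} \<in> U}"

definition idempotent_uf :: "nat set set \<Rightarrow> bool" where
  "idempotent_uf U \<longleftrightarrow> is_ultrafilter U \<and> uf_plus U U = U"

definition AU :: "nat set set \<Rightarrow> ((real set \<Rightarrow> real) \<Rightarrow> real) set" where
  "AU U = {\<mu>\<in>PrT. \<forall>W. weakstar_open W \<and> \<mu> \<in> W \<longrightarrow> {m\<in>Npos. W \<inter> AA m \<noteq> {}} \<in> U}"

end

theory Submission
  imports Defs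
begin

section \<open>Structure of TT\<close>

lemma TT_sub: "t \<in> TT \<Longrightarrow> t \<subseteq> {0<..1} \<and> finite t \<and> t \<noteq> {}"
proof (induction rule: TT.induct)
  case one
  then show ?case by auto
next
  case (hat a b)
  then show ?case by (auto simp: hat_def)
qed

lemma card_hat:
  assumes "a \<in> TT" "b \<in> TT"
  shows "card (hat a b) = card a + card b"
proof -
  have A: "a \<subseteq> {0<..1}" "finite a" and B: "b \<subseteq> {0<..1}" "finite b"
    using TT_sub assms by auto
  have d: "(\<lambda>x::real. x / 2) ` a \<inter> (\<lambda>x. (x + 1) / 2) ` b = {}"
    using A B by fastforce
  have i1: "inj_on (\<lambda>x::real. x / 2) a" by (auto simp: inj_on_def)
  have i2: "inj_on (\<lambda>x::real. (x + 1) / 2) b" by (auto simp: inj_on_def)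
  show ?thesis unfolding hat_def
    using card_Un_disjoint[OF finite_imageI[OF A(2)] finite_imageI[OF B(2)] d]
      card_image[OF i1] card_image[OF i2] by simp
qed

lemma card_pos_TT: "t \<in> TT \<Longrightarrow> 1 \<le> card t"
  using TT_sub by (metis One_nat_def Suc_leI card_gt_0_iff)

lemma hat_TTn: "t \<in> TTn m \<Longrightarrow> s \<in> TTn n \<Longrightarrow> hat t s \<in> TTn (m + n)"
  unfolding TTn_def using card_hat TT.hat by auto

lemma finite_TTn: "finite (TTn n)"
proof (induction n rule: less_induct)
  case (less n)
  have sub: "TTn n \<subseteq> {{1}} \<union> (\<Union>k\<in>{1..<n}. (\<lambda>(a,b). hat a b) ` (TTn k \<times> TTn (n-k)))"
  proof
    fix t assume t: "t \<in> TTn n"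
    hence tT: "t \<in> TT" and c: "card t = n" by (auto simp: TTn_def)
    from tT show "t \<in> {{1}} \<union> (\<Union>k\<in>{1..<n}. (\<lambda>(a,b). hat a b) ` (TTn k \<times> TTn (n-k)))"
    proof (cases rule: TT.cases)
      case one then show ?thesis by simp
    next
      case (hat a b)
      have ca: "card a \<ge> 1" "card b \<ge> 1" using hat card_pos_TT by auto
      have cs: "card a + card b = n" using c hat card_hat by simp
      have "a \<in> TTn (card a)" "b \<in> TTn (n - card a)" using hat cs by (auto simp: TTn_def)
      moreover have "card a \<in> {1..<n}" using ca cs by auto
      ultimately show ?thesis using hat by blast
    qed
  qed
  have "finite ((\<lambda>(a,b). hat a b) ` (TTn k \<times> TTn (n-k)))" if "k \<in> {1..<n}" for k
    using that less by auto
  hence "finite ({{1}} \<union> (\<Union>k\<in>{1..<n}. (\<lambda>(a,b). hat a b) ` (TTn k \<times> TTn (n-k))))"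
    by auto
  then show ?case using sub finite_subset by blast
qed

definition one :: "real set \<Rightarrow> real" where "one = (\<lambda>x. if x \<in> TT then 1 else 0)"

lemma linf_comb: "f \<in> linf \<Longrightarrow> g \<in> linf \<Longrightarrow> (\<lambda>x. c * f x + g x) \<in> linf"
proof -
  assume f: "f \<in> linf" and g: "g \<in> linf"
  then obtain B1 B2 where b1: "\<forall>x\<in>TT. \<bar>f x\<bar> \<le> B1" and b2: "\<forall>x\<in>TT. \<bar>g x\<bar> \<le> B2"
    by (auto simp: linf_def)
  have "\<forall>x\<in>TT. \<bar>c * f x + g x\<bar> \<le> \<bar>c\<bar> * B1 + B2"
  proof
    fix x assume "x \<in> TT"
    hence "\<bar>f x\<bar> \<le> B1" "\<bar>g x\<bar> \<le> B2" using b1 b2 by auto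
    hence "\<bar>c\<bar> * \<bar>f x\<bar> \<le> \<bar>c\<bar> * B1" by (simp add: mult_left_mono)
    thus "\<bar>c * f x + g x\<bar> \<le> \<bar>c\<bar> * B1 + B2"
      using \<open>\<bar>g x\<bar> \<le> B2\<close> abs_triangle_ineq[of "c * f x" "g x"] by (simp add: abs_mult)
  qed
  thus ?thesis using f g by (auto simp: linf_def)
qed

lemma one_linf: "one \<in> linf" unfolding linf_def one_def by auto

lemma zero_linf: "(\<lambda>x. 0) \<in> linf" unfolding linf_def by auto

lemma PrT_lin: "\<mu> \<in> PrT \<Longrightarrow> f \<in> linf \<Longrightarrow> g \<in> linf \<Longrightarrow> \<mu> (\<lambda>x. c * f x + g x) = c * \<mu> f + \<mu> g"
  unfolding PrT_def by blast

lemma PrT_pos: "\<mu> \<in> PrT \<Longrightarrow> f \<in> linf \<Longrightarrow> (\<forall>x\<in>TT. 0 \<le> f x) \<Longrightarrow> 0 \<le> \<mu> f"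
  unfolding PrT_def by blast

lemma PrT_one: "\<mu> \<in> PrT \<Longrightarrow> \<mu> one = 1"
  unfolding PrT_def one_def by blast

lemma PrT_bound:
  assumes m: "\<mu> \<in> PrT" and f: "f \<in> linf" and b: "\<forall>x\<in>TT. \<bar>f x\<bar> \<le> B"
  shows "\<bar>\<mu> f\<bar> \<le> B"
proof -
  have "0 \<le> \<mu> (\<lambda>x. c * f x + (B * one x + 0))" if "c = 1 \<or> c = -1" for c
  proof (rule PrT_pos[OF m linf_comb[OF f linf_comb[OF one_linf zero_linf]]], intro ballI)
    fix x assume "x \<in> TT"
    hence "\<bar>f x\<bar> \<le> B" using b by auto
    thus "0 \<le> c * f x + (B * one x + 0)" using that \<open>x \<in> TT\<close> by (auto simp: one_def)
  qed
  moreover have z: "\<mu> (\<lambda>x. 0) = 0"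
    using PrT_lin[OF m zero_linf zero_linf, of 1] by simp
  moreover have "\<mu> (\<lambda>x. B * one x + 0) = B"
    using PrT_lin[OF m one_linf zero_linf, of B] PrT_one[OF m] z by simp
  moreover have "\<mu> (\<lambda>x. c * f x + (B * one x + 0)) = c * \<mu> f + \<mu> (\<lambda>x. B * one x + 0)" for c
    by (rule PrT_lin[OF m f linf_comb[OF one_linf zero_linf]])
  ultimately have "0 \<le> 1 * \<mu> f + B" "0 \<le> (-1) * \<mu> f + B" by metis+
  thus ?thesis by linarith
qed

section \<open>The product\<close>

definition sec :: "(real set \<Rightarrow> real) \<Rightarrow> real set \<Rightarrow> real set \<Rightarrow> real" where
  "sec f x = (\<lambda>y. if y \<in> TT then f (hat x y) else 0)"

definition inner :: "((real set \<Rightarrow> real) \<Rightarrow> real) \<Rightarrow> (real set \<Rightarrow> real) \<Rightarrow> real set \<Rightarrow> real" where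
  "inner \<nu> f = (\<lambda>x. if x \<in> TT then \<nu> (sec f x) else 0)"

lemma mhat_eq: "mhat \<mu> \<nu> f = (if f \<in> linf then \<mu> (inner \<nu> f) else 0)"
  unfolding mhat_def inner_def sec_def by simp

lemma sec_linf: assumes "f \<in> linf" "x \<in> TT" shows "sec f x \<in> linf"
proof -
  obtain B where "\<forall>z\<in>TT. \<bar>f z\<bar> \<le> B" using assms by (auto simp: linf_def)
  hence "\<forall>y\<in>TT. \<bar>sec f x y\<bar> \<le> B" using assms TT.hat by (auto simp: sec_def)
  thus ?thesis by (auto simp: linf_def sec_def)
qed

lemma inner_linf: assumes "f \<in> linf" "\<nu> \<in> PrT" shows "inner \<nu> f \<in> linf"
proof -
  obtain B where B: "\<forall>z\<in>TT. \<bar>f z\<bar> \<le> B" using assms by (auto simp: linf_def)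
  have "\<forall>x\<in>TT. \<bar>inner \<nu> f x\<bar> \<le> B"
  proof
    fix x assume x: "x \<in> TT"
    have "\<forall>y\<in>TT. \<bar>sec f x y\<bar> \<le> B" using B x TT.hat by (auto simp: sec_def)
    thus "\<bar>inner \<nu> f x\<bar> \<le> B" using PrT_bound[OF assms(2) sec_linf[OF assms(1) x]] x
      by (simp add: inner_def)
  qed
  thus ?thesis by (auto simp: linf_def inner_def)
qed

lemma mhat_PrT: assumes m: "\<mu> \<in> PrT" and n: "\<nu> \<in> PrT" shows "mhat \<mu> \<nu> \<in> PrT"
proof -
  have lin: "mhat \<mu> \<nu> (\<lambda>x. c * f x + g x) = c * mhat \<mu> \<nu> f + mhat \<mu> \<nu> g"
    if f: "f \<in> linf" and g: "g \<in> linf" for f g c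
  proof -
    have "inner \<nu> (\<lambda>x. c * f x + g x) = (\<lambda>x. c * inner \<nu> f x + inner \<nu> g x)"
    proof
      fix x show "inner \<nu> (\<lambda>x. c * f x + g x) x = c * inner \<nu> f x + inner \<nu> g x"
      proof (cases "x \<in> TT")
        case True
        have "sec (\<lambda>x. c * f x + g x) x = (\<lambda>y. c * sec f x y + sec g x y)"
          by (auto simp: sec_def)
        then show ?thesis using True PrT_lin[OF n sec_linf[OF f True] sec_linf[OF g True]]
          by (simp add: inner_def)
      qed (simp add: inner_def)
    qed
    then show ?thesis using linf_comb[OF f g] f g PrT_lin[OF m inner_linf[OF f n] inner_linf[OF g n]]
      by (simp add: mhat_eq)
  qed
  have pos: "0 \<le> mhat \<mu> \<nu> f" if f: "f \<in> linf" and p: "\<forall>x\<in>TT. 0 \<le> f x" for f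
  proof -
    have "\<forall>x\<in>TT. 0 \<le> inner \<nu> f x"
    proof
      fix x assume x: "x \<in> TT"
      have "\<forall>y\<in>TT. 0 \<le> sec f x y" using p x TT.hat by (auto simp: sec_def)
      thus "0 \<le> inner \<nu> f x" using PrT_pos[OF n sec_linf[OF f x]] x by (simp add: inner_def)
    qed
    thus ?thesis using PrT_pos[OF m inner_linf[OF f n]] f by (simp add: mhat_eq)
  qed
  have "inner \<nu> one = one"
  proof
    fix x show "inner \<nu> one x = one x"
    proof (cases "x \<in> TT")
      case True
      have "sec one x = one" using True TT.hat by (auto simp: sec_def one_def)
      then show ?thesis using True PrT_one[OF n] by (simp add: inner_def one_def)
    qed (simp add: inner_def one_def)
  qed
  hence un: "mhat \<mu> \<nu> one = 1" using one_linf PrT_one[OF m] by (simp add: mhat_eq)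
  show ?thesis unfolding PrT_def using lin pos un by (auto simp: one_def mhat_eq)
qed

lemma AA_val:
  assumes "\<alpha> \<in> AA m"
  obtains p where "\<forall>t\<in>TTn m. 0 \<le> p t" "(\<Sum>t\<in>TTn m. p t) = 1"
    "\<forall>f\<in>linf. \<alpha> f = (\<Sum>t\<in>TTn m. p t * f t)"
  using assms unfolding AA_def by blast

lemma TTn_TT: "t \<in> TTn m \<Longrightarrow> t \<in> TT" by (simp add: TTn_def)

lemma mhat_formula:
  assumes a: "\<forall>f\<in>linf. \<alpha> f = (\<Sum>t\<in>TTn m. p t * f t)"
    and b: "\<forall>f\<in>linf. \<beta> f = (\<Sum>s\<in>TTn n. q s * f s)" and f: "f \<in> linf" and bP: "\<beta> \<in> PrT"
  shows "mhat \<alpha> \<beta> f = (\<Sum>t\<in>TTn m. p t * \<beta> (sec f t))"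
        "mhat \<alpha> \<beta> f = (\<Sum>t\<in>TTn m. \<Sum>s\<in>TTn n. p t * q s * f (hat t s))"
proof -
  show 1: "mhat \<alpha> \<beta> f = (\<Sum>t\<in>TTn m. p t * \<beta> (sec f t))"
  proof -
    have "mhat \<alpha> \<beta> f = \<alpha> (inner \<beta> f)" using f by (simp add: mhat_eq)
    also have "\<dots> = (\<Sum>t\<in>TTn m. p t * inner \<beta> f t)" using a inner_linf[OF f bP] by blast
    also have "\<dots> = (\<Sum>t\<in>TTn m. p t * \<beta> (sec f t))"
      by (rule sum.cong) (simp_all add: inner_def TTn_TT)
    finally show ?thesis .
  qed
  have "\<beta> (sec f t) = (\<Sum>s\<in>TTn n. q s * f (hat t s))" if "t \<in> TTn m" for t
  proof -
    have "\<beta> (sec f t) = (\<Sum>s\<in>TTn n. q s * sec f t s)" using b sec_linf[OF f TTn_TT[OF that]] by blast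
    also have "\<dots> = (\<Sum>s\<in>TTn n. q s * f (hat t s))"
      by (rule sum.cong) (simp_all add: sec_def TTn_TT)
    finally show ?thesis .
  qed
  thus "mhat \<alpha> \<beta> f = (\<Sum>t\<in>TTn m. \<Sum>s\<in>TTn n. p t * q s * f (hat t s))"
    unfolding 1 by (auto simp: sum_distrib_left mult.assoc intro!: sum.cong)
qed

lemma mhat_AA:
  assumes "\<alpha> \<in> AA m" "\<beta> \<in> AA n"
  shows "mhat \<alpha> \<beta> \<in> AA (m + n)"
proof -
  obtain p where p: "\<forall>t\<in>TTn m. 0 \<le> p t" "(\<Sum>t\<in>TTn m. p t) = 1"
    "\<forall>f\<in>linf. \<alpha> f = (\<Sum>t\<in>TTn m. p t * f t)" using AA_val[OF assms(1)] by blast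
  obtain q where q: "\<forall>t\<in>TTn n. 0 \<le> q t" "(\<Sum>t\<in>TTn n. q t) = 1"
    "\<forall>f\<in>linf. \<beta> f = (\<Sum>t\<in>TTn n. q t * f t)" using AA_val[OF assms(2)] by blast
  have aP: "\<alpha> \<in> PrT" and bP: "\<beta> \<in> PrT" using assms by (auto simp: AA_def)
  define r where "r u = (\<Sum>t\<in>TTn m. \<Sum>s\<in>TTn n. if hat t s = u then p t * q s else 0)" for u
  have key: "(\<Sum>u\<in>TTn (m+n). r u * g u) = (\<Sum>t\<in>TTn m. \<Sum>s\<in>TTn n. p t * q s * g (hat t s))" for g
  proof -
    have "(\<Sum>u\<in>TTn (m+n). r u * g u)
        = (\<Sum>u\<in>TTn (m+n). \<Sum>t\<in>TTn m. \<Sum>s\<in>TTn n. if hat t s = u then p t * q s * g u else 0)"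
      unfolding r_def sum_distrib_right by (rule sum.cong[OF refl], rule sum.cong[OF refl], rule sum.cong[OF refl]) simp
    also have "\<dots> = (\<Sum>t\<in>TTn m. \<Sum>u\<in>TTn (m+n). \<Sum>s\<in>TTn n. if hat t s = u then p t * q s * g u else 0)"
      by (rule sum.swap)
    also have "\<dots> = (\<Sum>t\<in>TTn m. \<Sum>s\<in>TTn n. \<Sum>u\<in>TTn (m+n). if hat t s = u then p t * q s * g u else 0)"
      by (rule sum.cong[OF refl], rule sum.swap)
    also have "\<dots> = (\<Sum>t\<in>TTn m. \<Sum>s\<in>TTn n. p t * q s * g (hat t s))"
    proof (rule sum.cong[OF refl], rule sum.cong[OF refl])
      fix t s assume "t \<in> TTn m" "s \<in> TTn n"
      hence "hat t s \<in> TTn (m+n)" by (rule hat_TTn)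
      thus "(\<Sum>u\<in>TTn (m+n). if hat t s = u then p t * q s * g u else 0) = p t * q s * g (hat t s)"
        using finite_TTn[of "m+n"] by simp
    qed
    finally show ?thesis .
  qed
  have "\<forall>u\<in>TTn (m+n). 0 \<le> r u" using p q unfolding r_def by (auto intro!: sum_nonneg)
  moreover have "(\<Sum>u\<in>TTn (m+n). r u) = 1"
    using key[of "\<lambda>_. 1"] p(2) q(2) by (simp add: sum_distrib_left[symmetric] sum_distrib_right[symmetric])
  moreover have "\<forall>f\<in>linf. mhat \<alpha> \<beta> f = (\<Sum>u\<in>TTn (m+n). r u * f u)"
    using mhat_formula(2)[OF p(3) q(3) _ bP] key by simp
  ultimately show ?thesis using mhat_PrT[OF aP bP] unfolding AA_def by blast
qed

lemma nbhd_open: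
  assumes "finite F" "F \<subseteq> linf" "e > 0"
  shows "weakstar_open {\<alpha>\<in>PrT. \<forall>g\<in>F. \<bar>\<alpha> g - \<mu> g\<bar> < e}"
  unfolding weakstar_open_def
proof (intro conjI ballI)
  fix \<alpha> assume a: "\<alpha> \<in> {\<alpha>\<in>PrT. \<forall>g\<in>F. \<bar>\<alpha> g - \<mu> g\<bar> < e}"
  define d where "d = Min (insert e ((\<lambda>g. e - \<bar>\<alpha> g - \<mu> g\<bar>) ` F))"
  have d0: "d > 0" unfolding d_def using assms a by (auto simp: Min_gr_iff)
  have dle: "d \<le> e - \<bar>\<alpha> g - \<mu> g\<bar>" if "g \<in> F" for g
    unfolding d_def using assms that by (auto intro: Min_le)
  have "{\<beta>\<in>PrT. \<forall>g\<in>F. \<bar>\<beta> g - \<alpha> g\<bar> < d} \<subseteq> {\<alpha>\<in>PrT. \<forall>g\<in>F. \<bar>\<alpha> g - \<mu> g\<bar> < e}"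
  proof safe
    fix \<beta> g assume "\<beta> \<in> PrT" "\<forall>g\<in>F. \<bar>\<beta> g - \<alpha> g\<bar> < d" "g \<in> F"
    hence "\<bar>\<beta> g - \<alpha> g\<bar> < d" "d \<le> e - \<bar>\<alpha> g - \<mu> g\<bar>" using dle[of g] by auto
    thus "\<bar>\<beta> g - \<mu> g\<bar> < e" by linarith
  qed
  thus "\<exists>F' e'. finite F' \<and> F' \<subseteq> linf \<and> e' > 0 \<and>
        {\<nu>\<in>PrT. \<forall>g\<in>F'. \<bar>\<nu> g - \<alpha> g\<bar> < e'} \<subseteq> {\<alpha>\<in>PrT. \<forall>g\<in>F. \<bar>\<alpha> g - \<mu> g\<bar> < e}"
    using assms d0 by blast
qed auto

lemma AU_nbhd:
  assumes "\<mu> \<in> AU U" "finite F" "F \<subseteq> linf" "e > 0"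
  shows "{m\<in>Npos. {\<alpha>\<in>PrT. \<forall>g\<in>F. \<bar>\<alpha> g - \<mu> g\<bar> < e} \<inter> AA m \<noteq> {}} \<in> U"
  using assms nbhd_open[OF assms(2-4), of \<mu>] unfolding AU_def by auto

lemma uf_up: "is_ultrafilter U \<Longrightarrow> A \<in> U \<Longrightarrow> A \<subseteq> B \<Longrightarrow> B \<subseteq> Npos \<Longrightarrow> B \<in> U"
  unfolding is_ultrafilter_def by blast

lemma strict_avg:
  assumes fin: "finite T" and p: "\<forall>t\<in>T. 0 \<le> p t" "(\<Sum>t\<in>T. p t) = 1"
    and d: "\<forall>t\<in>T. \<bar>d t\<bar> < (e::real)"
  shows "\<bar>\<Sum>t\<in>T. p t * d t\<bar> < e"
proof -
  obtain t0 where t0: "t0 \<in> T" "p t0 > 0"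
  proof (rule ccontr)
    assume "\<not> thesis"
    hence "\<forall>t\<in>T. p t = 0" using that p(1) by force
    thus False using p(2) by simp
  qed
  have "0 < (\<Sum>t\<in>T. p t * (e - \<bar>d t\<bar>))"
    by (rule sum_pos2[OF fin t0(1)]) (use t0 p d in auto)
  hence "(\<Sum>t\<in>T. p t * \<bar>d t\<bar>) < e"
    using p(2) by (simp add: right_diff_distrib sum_subtractf sum_distrib_right[symmetric])
  moreover have "\<bar>\<Sum>t\<in>T. p t * d t\<bar> \<le> (\<Sum>t\<in>T. p t * \<bar>d t\<bar>)"
    using sum_abs[of "\<lambda>t. p t * d t" T] p(1) by (simp add: abs_mult)
  ultimately show ?thesis by linarith
qed

theorem lemma3p1:
  assumes "idempotent_uf U"
    and "\<mu> \<in> AU U" and "\<nu> \<in> AU U"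
  shows "mhat \<mu> \<nu> \<in> AU U"
proof -
  have uf: "is_ultrafilter U" and idem: "uf_plus U U = U" using assms(1) by (auto simp: idempotent_uf_def)
  have mP: "\<mu> \<in> PrT" and nP: "\<nu> \<in> PrT" using assms by (auto simp: AU_def)
  have lP: "mhat \<mu> \<nu> \<in> PrT" by (rule mhat_PrT[OF mP nP])
  have "{m\<in>Npos. W \<inter> AA m \<noteq> {}} \<in> U" if W: "weakstar_open W" "mhat \<mu> \<nu> \<in> W" for W
  proof -
    obtain F e where F: "finite F" "F \<subseteq> linf" "e > 0"
      and FW: "{\<gamma>\<in>PrT. \<forall>g\<in>F. \<bar>\<gamma> g - mhat \<mu> \<nu> g\<bar> < e} \<subseteq> W"
      using W unfolding weakstar_open_def by blast
    define S where "S = {k\<in>Npos. W \<inter> AA k \<noteq> {}}"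
    define G where "G = inner \<nu> ` F"
    have G: "finite G" "G \<subseteq> linf" using F inner_linf[OF _ nP] by (auto simp: G_def)
    define M where "M = {m\<in>Npos. {\<alpha>\<in>PrT. \<forall>g\<in>G. \<bar>\<alpha> g - \<mu> g\<bar> < e/2} \<inter> AA m \<noteq> {}}"
    have MU: "M \<in> U" unfolding M_def by (rule AU_nbhd[OF assms(2) G]) (use F in simp)
    have "M \<subseteq> {m\<in>Npos. {n\<in>Npos. m + n \<in> S} \<in> U}"
    proof
      fix m assume mM: "m \<in> M"
      then obtain \<alpha> where a: "\<alpha> \<in> PrT" "\<forall>g\<in>G. \<bar>\<alpha> g - \<mu> g\<bar> < e/2" "\<alpha> \<in> AA m" and mN: "m \<in> Npos"
        unfolding M_def by blast
      obtain p where p: "\<forall>t\<in>TTn m. 0 \<le> p t" "(\<Sum>t\<in>TTn m. p t) = 1"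
        "\<forall>f\<in>linf. \<alpha> f = (\<Sum>t\<in>TTn m. p t * f t)" using AA_val[OF a(3)] by blast
      define H where "H = (\<lambda>(g,t). sec g t) ` (F \<times> TTn m)"
      have H: "finite H" "H \<subseteq> linf" unfolding H_def using F finite_TTn sec_linf TTn_TT by auto
      define N where "N = {n\<in>Npos. {\<beta>\<in>PrT. \<forall>h\<in>H. \<bar>\<beta> h - \<nu> h\<bar> < e/2} \<inter> AA n \<noteq> {}}"
      have NU: "N \<in> U" unfolding N_def by (rule AU_nbhd[OF assms(3) H]) (use F in simp)
      have "N \<subseteq> {n\<in>Npos. m + n \<in> S}"
      proof
        fix n assume "n \<in> N"
        then obtain \<beta> where b: "\<beta> \<in> PrT" "\<forall>h\<in>H. \<bar>\<beta> h - \<nu> h\<bar> < e/2" "\<beta> \<in> AA n" and nN: "n \<in> Npos"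
          unfolding N_def by blast
        obtain q where q: "\<forall>t\<in>TTn n. 0 \<le> q t" "(\<Sum>t\<in>TTn n. q t) = 1"
          "\<forall>f\<in>linf. \<beta> f = (\<Sum>t\<in>TTn n. q t * f t)" using AA_val[OF b(3)] by blast
        have inAA: "mhat \<alpha> \<beta> \<in> AA (m + n)" by (rule mhat_AA[OF a(3) b(3)])
        have "\<bar>mhat \<alpha> \<beta> g - mhat \<mu> \<nu> g\<bar> < e" if g: "g \<in> F" for g
        proof -
          have gl: "g \<in> linf" using g F by auto
          have e1: "mhat \<alpha> \<beta> g = (\<Sum>t\<in>TTn m. p t * \<beta> (sec g t))"
            by (rule mhat_formula(1)[OF p(3) q(3) gl b(1)])
          have e2: "\<alpha> (inner \<nu> g) = (\<Sum>t\<in>TTn m. p t * \<nu> (sec g t))"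
          proof -
            have "\<alpha> (inner \<nu> g) = (\<Sum>t\<in>TTn m. p t * inner \<nu> g t)" using p(3) inner_linf[OF gl nP] by blast
            also have "\<dots> = (\<Sum>t\<in>TTn m. p t * \<nu> (sec g t))"
              by (rule sum.cong) (simp_all add: inner_def TTn_TT)
            finally show ?thesis .
          qed
          have "\<bar>\<Sum>t\<in>TTn m. p t * (\<beta> (sec g t) - \<nu> (sec g t))\<bar> < e/2"
            by (rule strict_avg[OF finite_TTn p(1,2)]) (use b(2) g in \<open>auto simp: H_def\<close>)
          hence 1: "\<bar>mhat \<alpha> \<beta> g - \<alpha> (inner \<nu> g)\<bar> < e/2"
            unfolding e1 e2 by (simp add: right_diff_distrib sum_subtractf)
          have 2: "\<bar>\<alpha> (inner \<nu> g) - \<mu> (inner \<nu> g)\<bar> < e/2" using a(2) g by (auto simp: G_def)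
          have 3: "mhat \<mu> \<nu> g = \<mu> (inner \<nu> g)" using gl by (simp add: mhat_eq)
          show ?thesis using 1 2 3 by linarith
        qed
        hence "mhat \<alpha> \<beta> \<in> W" using FW mhat_PrT[OF a(1) b(1)] by blast
        moreover have "m + n \<in> Npos" using mN by (simp add: Npos_def)
        ultimately show "n \<in> {n\<in>Npos. m + n \<in> S}" using inAA nN unfolding S_def by blast
      qed
      hence "{n\<in>Npos. m + n \<in> S} \<in> U" using uf_up[OF uf NU] by blast
      thus "m \<in> {m\<in>Npos. {n\<in>Npos. m + n \<in> S} \<in> U}" using mN by blast
    qed
    hence "{m\<in>Npos. {n\<in>Npos. m + n \<in> S} \<in> U} \<in> U" using uf_up[OF uf MU] by blast
    hence "S \<in> uf_plus U U" unfolding uf_plus_def S_def by blast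
    thus ?thesis using idem S_def by simp
  qed
  thus ?thesis using lP unfolding AU_def by blast
qed

end
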